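(* Assume $-\infty<l<r<\infty$, $\inf\operatorname{supp}\mu>-\infty$ and $\sup\operatorname{supp}\mu<\infty$. If $\limsup_{x\searrow l}\frac{|\eta(x)|}{x-l}<\infty$, then: $q(l+)=\infty$ implies $\liminf_{y\searrow l}G_y(\bar a(y))>0$. If $\limsup_{x\nearrow r}\frac{|\eta(x)|}{r-x}<\infty$, then: $q(r-)=\infty$ implies $\liminf_{y\nearrow r}G_y(\bar a(y))>0$.
   Context: Let $I=(l,r)$, $\eta\colon\mathbb R\to\mathbb R$ Borel with $\eta\ne0$ on $I$, $1/\eta^2\in L^1_{\mathrm{loc}}(I)$, $\eta=0$ off $I$, $m\in I$. $q(y,x)=\int_y^x\int_y^u\frac{2}{\eta^2(z)}dz\,du\in[0,\infty]$; $q(l+)=\lim_{x\searrow l}q(m,x)$, $q(r-)=\lim_{x\nearrow r}q(m,x)$. $\mu\ne\delta_0$ is a centered probability measure, $G_y(a)=\int q(y,y+ax)\mu(dx)$, and $\bar a(y)=\frac{l-y}{\inf\operatorname{supp}\mu}\wedge\frac{r-y}{\sup\operatorname{supp}\mu}$ for $y\in I$. *)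

theory Defs
  imports "HOL-Probability.Probability"
begin

text \<open>The integrand 2/eta(z)^2, with the convention 2/0 = infinity (eta vanishes off I).\<close>
definition inv_eta2 :: "(real \<Rightarrow> real) \<Rightarrow> real \<Rightarrow> ennreal" where
  "inv_eta2 \<eta> z = (if \<eta> z = 0 then \<infinity> else ennreal (2 / (\<eta> z)\<^sup>2))"

text \<open>q(y,x) = int_y^x int_y^u 2/eta^2(z) dz du, oriented integrals; for x < y both
  orientations flip, giving int_x^y int_u^y.\<close>
definition qfun :: "(real \<Rightarrow> real) \<Rightarrow> real \<Rightarrow> real \<Rightarrow> ennreal" where
  "qfun \<eta> y x =
     (if y \<le> x then (\<integral>\<^sup>+ u \<in> {y..x}. (\<integral>\<^sup>+ z \<in> {y..u}. inv_eta2 \<eta> z \<partial>lborel) \<partial>lborel)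
      else (\<integral>\<^sup>+ u \<in> {x..y}. (\<integral>\<^sup>+ z \<in> {u..y}. inv_eta2 \<eta> z \<partial>lborel) \<partial>lborel))"

definition msupp :: "real measure \<Rightarrow> real set" where
  "msupp \<mu> = {x. \<forall>e>0. emeasure \<mu> (ball x e) > 0}"

definition Gfun :: "(real \<Rightarrow> real) \<Rightarrow> real measure \<Rightarrow> real \<Rightarrow> real \<Rightarrow> ennreal" where
  "Gfun \<eta> \<mu> y a = (\<integral>\<^sup>+ x. qfun \<eta> y (y + a * x) \<partial>\<mu>)"

definition abar :: "real \<Rightarrow> real \<Rightarrow> real measure \<Rightarrow> real \<Rightarrow> real" where
  "abar l r \<mu> y = min ((l - y) / Inf (msupp \<mu>)) ((r - y) / Sup (msupp \<mu>))"

end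

theory Submission
  imports Defs
begin


lemma inner_lower:
  fixes c :: real
  assumes "c \<ge> 0" "a \<le> b" "\<And>z. a \<le> z \<Longrightarrow> z \<le> b \<Longrightarrow> ennreal c \<le> inv_eta2 \<eta> z"
  shows "ennreal (c * (b - a)) \<le> (\<integral>\<^sup>+ z \<in> {a..b}. inv_eta2 \<eta> z \<partial>lborel)"
proof -
  have "(\<integral>\<^sup>+ z \<in> {a..b}. ennreal c \<partial>lborel) \<le> (\<integral>\<^sup>+ z \<in> {a..b}. inv_eta2 \<eta> z \<partial>lborel)"
    by (intro nn_integral_mono) (auto simp: indicator_def assms(3))
  moreover have "(\<integral>\<^sup>+ z \<in> {a..b}. ennreal c \<partial>lborel) = ennreal (c * (b - a))"
    using assms by (simp add: nn_integral_cmult_indicator ennreal_mult)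
  ultimately show ?thesis by simp
qed

lemma q_lower:
  fixes c t y :: real
  assumes c: "c \<ge> 0"
    and h: "\<And>z. min y (y+t) \<le> z \<Longrightarrow> z \<le> max y (y+t) \<Longrightarrow> ennreal c \<le> inv_eta2 \<eta> z"
  shows "ennreal (c * t\<^sup>2 / 4) \<le> qfun \<eta> y (y + t)"
proof (cases "t \<ge> 0")
  case True
  have "(\<integral>\<^sup>+ u. ennreal (c * t / 2) * indicator {y + t/2..y+t} u \<partial>lborel)
        \<le> (\<integral>\<^sup>+ u \<in> {y..y+t}. (\<integral>\<^sup>+ z \<in> {y..u}. inv_eta2 \<eta> z \<partial>lborel) \<partial>lborel)"
  proof (intro nn_integral_mono)
    fix u
    show "ennreal (c * t / 2) * indicator {y + t/2..y+t} u
          \<le> (\<integral>\<^sup>+ z \<in> {y..u}. inv_eta2 \<eta> z \<partial>lborel) * indicator {y..y+t} u"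
    proof (cases "u \<in> {y + t/2..y+t}")
      case True
      have "ennreal (c * (u - y)) \<le> (\<integral>\<^sup>+ z \<in> {y..u}. inv_eta2 \<eta> z \<partial>lborel)"
        using True \<open>t \<ge> 0\<close> by (intro inner_lower c h) auto
      moreover have "c * t / 2 \<le> c * (u - y)" proof -
        have "c * (t/2) \<le> c * (u - y)" using True c by (intro mult_left_mono) auto
        thus ?thesis by simp
      qed
      ultimately show ?thesis using True \<open>t \<ge> 0\<close>
        by (auto simp: indicator_def intro: order_trans[OF ennreal_leI])
    qed (simp add: indicator_def)
  qed
  moreover have "(\<integral>\<^sup>+ u. ennreal (c * t / 2) * indicator {y + t/2..y+t} u \<partial>lborel) = ennreal (c * t\<^sup>2 / 4)"
    using True c by (simp add: nn_integral_cmult_indicator ennreal_mult[symmetric] power2_eq_square)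
  ultimately show ?thesis using True by (simp add: qfun_def)
next
  case False
  have "(\<integral>\<^sup>+ u. ennreal (c * (-t) / 2) * indicator {y + t..y+t/2} u \<partial>lborel)
        \<le> (\<integral>\<^sup>+ u \<in> {y+t..y}. (\<integral>\<^sup>+ z \<in> {u..y}. inv_eta2 \<eta> z \<partial>lborel) \<partial>lborel)"
  proof (intro nn_integral_mono)
    fix u
    show "ennreal (c * (-t) / 2) * indicator {y + t..y+t/2} u
          \<le> (\<integral>\<^sup>+ z \<in> {u..y}. inv_eta2 \<eta> z \<partial>lborel) * indicator {y+t..y} u"
    proof (cases "u \<in> {y + t..y+t/2}")
      case True
      have "ennreal (c * (y - u)) \<le> (\<integral>\<^sup>+ z \<in> {u..y}. inv_eta2 \<eta> z \<partial>lborel)"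
        using True \<open>\<not> t \<ge> 0\<close> by (intro inner_lower c h) auto
      moreover have "c * (-t) / 2 \<le> c * (y - u)" proof -
        have "c * ((-t)/2) \<le> c * (y - u)" using True c by (intro mult_left_mono) auto
        thus ?thesis by simp
      qed
      ultimately show ?thesis using True \<open>\<not> t \<ge> 0\<close>
        by (auto simp: indicator_def intro: order_trans[OF ennreal_leI])
    qed (simp add: indicator_def)
  qed
  moreover have "(\<integral>\<^sup>+ u. ennreal (c * (-t) / 2) * indicator {y + t..y+t/2} u \<partial>lborel) = ennreal (c * t\<^sup>2 / 4)"
  proof -
    have "ennreal (- (c * t / 2)) * ennreal (- (t / 2)) = ennreal ((- (c * t / 2)) * (- (t / 2)))"
      using False c by (intro ennreal_mult[symmetric]) (auto simp: mult_nonneg_nonpos)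
    thus ?thesis using False c by (simp add: nn_integral_cmult_indicator power2_eq_square mult.assoc)
  qed
  ultimately show ?thesis using False by (simp add: qfun_def)
qed



lemma supp_null_Icc:
  fixes \<mu> :: "real measure"
  assumes sm: "sets \<mu> = sets borel" and dis: "{a..b} \<inter> msupp \<mu> = {}"
  shows "{a..b} \<in> null_sets \<mu>"
proof -
  have "\<forall>x\<in>{a..b}. \<exists>e>0. emeasure \<mu> (ball x e) = 0"
  proof
    fix x assume "x \<in> {a..b}"
    then have "x \<notin> msupp \<mu>" using dis by blast
    then obtain e where "e > 0" "\<not> 0 < emeasure \<mu> (ball x e)" unfolding msupp_def by auto
    then show "\<exists>e>0. emeasure \<mu> (ball x e) = 0" by (auto simp: not_gr_zero)
  qed
  then obtain e where e: "\<forall>x\<in>{a..b}. e x > 0 \<and> emeasure \<mu> (ball x (e x)) = 0"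
    using bchoice[of "{a..b}" "\<lambda>x e. e > 0 \<and> emeasure \<mu> (ball x e) = 0"] by blast
  have cov: "{a..b} \<subseteq> (\<Union>x\<in>{a..b}. ball x (e x))"
  proof
    fix x assume "x \<in> {a..b}"
    then have "x \<in> ball x (e x)" using e by simp
    then show "x \<in> (\<Union>x\<in>{a..b}. ball x (e x))" using \<open>x \<in> {a..b}\<close> by blast
  qed
  obtain C where C: "C \<subseteq> {a..b}" "finite C" "{a..b} \<subseteq> (\<Union>x\<in>C. ball x (e x))"
    using compactE_image[OF compact_Icc open_ball cov] by metis
  have "(\<Union>x\<in>C. ball x (e x)) \<in> null_sets \<mu>"
  proof (rule null_sets_UN')
    show "countable C" using C(2) by (rule countable_finite)
    fix x assume "x \<in> C"
    then have "emeasure \<mu> (ball x (e x)) = 0" using e C(1) by blast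
    moreover have "ball x (e x) \<in> sets \<mu>" unfolding sm by simp
    ultimately show "ball x (e x) \<in> null_sets \<mu>" by (rule null_setsI)
  qed
  moreover have "{a..b} \<in> sets \<mu>" unfolding sm by simp
  ultimately show ?thesis using C(3) by (rule null_sets_subset)
qed

lemma supp_facts:
  fixes \<mu> :: "real measure"
  assumes prob: "prob_space \<mu>" and sm: "sets \<mu> = sets borel"
    and bb: "bdd_below (msupp \<mu>)" and ba: "bdd_above (msupp \<mu>)"
  shows "msupp \<mu> \<noteq> {}" "AE x in \<mu>. Inf (msupp \<mu>) \<le> x \<and> x \<le> Sup (msupp \<mu>)"
proof -
  have sp: "space \<mu> = UNIV" using sets_eq_imp_space_eq[OF sm] by simp
  show ne: "msupp \<mu> \<noteq> {}"
  proof
    assume e: "msupp \<mu> = {}"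
    have "(\<Union>n::nat. {-real n..real n}) \<in> null_sets \<mu>"
      using e sm by (intro null_sets_UN supp_null_Icc) auto
    moreover have "(\<Union>n::nat. {-real n..real n}) = UNIV"
    proof (safe)
      fix x :: real
      obtain n where "\<bar>x\<bar> \<le> real n" using real_arch_simple by blast
      then show "x \<in> (\<Union>n::nat. {-real n..real n})" by (auto simp: abs_le_iff intro!: exI[of _ n])
    qed auto
    ultimately have "UNIV \<in> null_sets \<mu>" by simp
    then show False using prob_space.emeasure_space_1[OF prob] sp by (simp add: null_sets_def)
  qed
  let ?A = "Inf (msupp \<mu>)" and ?B = "Sup (msupp \<mu>)"
  have up: "\<And>s. s \<in> msupp \<mu> \<Longrightarrow> s \<le> ?B" using ba by (rule cSup_upper[rotated])
  have lo: "\<And>s. s \<in> msupp \<mu> \<Longrightarrow> ?A \<le> s" using bb by (rule cInf_lower[rotated])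
  define N where "N = (\<Union>(n,m)\<in>(UNIV::(nat\<times>nat) set). {?B + 1 / Suc n .. ?B + real m})
                  \<union> (\<Union>(n,m)\<in>(UNIV::(nat\<times>nat) set). {?A - real m .. ?A - 1 / Suc n})"
  have "N \<in> null_sets \<mu>"
    unfolding N_def
  proof (intro null_sets.Un null_sets_UN')
    fix p :: "nat \<times> nat"
    obtain n m where p: "p = (n, m)" by fastforce
    have "{?B + 1 / Suc n .. ?B + real m} \<inter> msupp \<mu> = {}"
    proof -
      have p0: "0 < 1 / real (Suc n)" by simp
      { fix s assume s1: "s \<in> {?B + 1 / Suc n .. ?B + real m}" and s2: "s \<in> msupp \<mu>"
        from s1 have "?B + 1 / Suc n \<le> s" by simp
        moreover have "s \<le> ?B" using up[OF s2] .
        ultimately have False using p0 by linarith }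
      then show ?thesis by blast
    qed
    then have "{?B + 1 / Suc n .. ?B + real m} \<in> null_sets \<mu>" by (rule supp_null_Icc[OF sm])
    then show "(case p of (n, m) \<Rightarrow> {?B + 1 / Suc n .. ?B + real m}) \<in> null_sets \<mu>"
      unfolding p by simp
    have "{?A - real m .. ?A - 1 / Suc n} \<inter> msupp \<mu> = {}"
    proof -
      have p0: "0 < 1 / real (Suc n)" by simp
      { fix s assume s1: "s \<in> {?A - real m .. ?A - 1 / Suc n}" and s2: "s \<in> msupp \<mu>"
        from s1 have "s \<le> ?A - 1 / Suc n" by simp
        moreover have "?A \<le> s" using lo[OF s2] .
        ultimately have False using p0 by linarith }
      then show ?thesis by blast
    qed
    then have "{?A - real m .. ?A - 1 / Suc n} \<in> null_sets \<mu>" by (rule supp_null_Icc[OF sm])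
    then show "(case p of (n, m) \<Rightarrow> {?A - real m .. ?A - 1 / Suc n}) \<in> null_sets \<mu>"
      unfolding p by simp
  qed auto
  moreover have "{x \<in> space \<mu>. \<not> (?A \<le> x \<and> x \<le> ?B)} \<subseteq> N"
  proof (intro subsetI)
    fix x assume "x \<in> {x \<in> space \<mu>. \<not> (?A \<le> x \<and> x \<le> ?B)}"
    then have x: "\<not> (?A \<le> x \<and> x \<le> ?B)" by simp
    obtain m :: nat where m: "\<bar>x\<bar> + \<bar>?A\<bar> + \<bar>?B\<bar> \<le> real m" using real_arch_simple by blast
    show "x \<in> N"
    proof (cases "x > ?B")
      case True
      obtain n where n: "inverse (real (Suc n)) < x - ?B" using reals_Archimedean[of "x - ?B"] True by auto
      have "x \<in> {?B + 1 / Suc n .. ?B + real m}"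
      proof -
        have "1 / real (Suc n) < x - ?B" using n by (simp add: inverse_eq_divide)
        moreover have "x \<le> ?B + real m" using m abs_ge_self[of x] abs_ge_minus_self[of ?B] abs_ge_zero[of ?A] by linarith
        ultimately show ?thesis by simp
      qed
      then show ?thesis unfolding N_def by (intro UnI1 UN_I[of "(n,m)"]) auto
    next
      case False
      then have "x < ?A" using x by auto
      then obtain n where n: "inverse (real (Suc n)) < ?A - x" using reals_Archimedean[of "?A - x"] by auto
      have "x \<in> {?A - real m .. ?A - 1 / Suc n}"
      proof -
        have "1 / real (Suc n) < ?A - x" using n by (simp add: inverse_eq_divide)
        moreover have "?A - real m \<le> x" using m abs_ge_minus_self[of x] abs_ge_self[of ?A] abs_ge_zero[of ?B] by linarith
        ultimately show ?thesis by simp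
      qed
      then show ?thesis unfolding N_def by (intro UnI2 UN_I[of "(n,m)"]) auto
    qed
  qed
  ultimately show "AE x in \<mu>. ?A \<le> x \<and> x \<le> ?B" by (rule AE_I')
qed



lemma inv_eta2_lower:
  fixes B :: real
  assumes "B > 0" "\<eta> z = 0 \<or> \<bar>\<eta> z\<bar> \<le> B"
  shows "ennreal (2 / B\<^sup>2) \<le> inv_eta2 \<eta> z"
proof (cases "\<eta> z = 0")
  case False
  then have "\<bar>\<eta> z\<bar> \<le> B" using assms by auto
  then have "(\<eta> z)\<^sup>2 \<le> B\<^sup>2" by (metis abs_le_square_iff abs_of_pos assms(1))
  moreover have "(\<eta> z)\<^sup>2 > 0" using False by simp
  ultimately have "2 / B\<^sup>2 \<le> 2 / (\<eta> z)\<^sup>2" by (intro divide_left_mono) (use assms(1) False in auto)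
  then show ?thesis using False by (simp add: inv_eta2_def ennreal_leI)
qed (simp add: inv_eta2_def)

lemma not_ae_zero:
  fixes \<mu> :: "real measure"
  assumes prob: "prob_space \<mu>" and sm: "sets \<mu> = sets borel" and nd: "\<mu> \<noteq> return borel 0"
  shows "\<not> (AE x in \<mu>. x = 0)"
proof
  assume ae: "AE x in \<mu>. x = 0"
  have sp: "space \<mu> = UNIV" using sets_eq_imp_space_eq[OF sm] by simp
  have "\<mu> = return borel 0"
  proof (rule measure_eqI)
    show "sets \<mu> = sets (return borel 0)" using sm by simp
    fix A assume A: "A \<in> sets \<mu>"
    show "emeasure \<mu> A = emeasure (return borel 0) A"
    proof (cases "(0::real) \<in> A")
      case True
      have "emeasure \<mu> A = emeasure \<mu> (space \<mu>)"
        using ae True A sets.top[of \<mu>] by (intro emeasure_eq_AE) (auto simp: sp)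
      then show ?thesis using True A sm prob_space.emeasure_space_1[OF prob] by simp
    next
      case False
      have "emeasure \<mu> A = emeasure \<mu> {}"
        using ae False A by (intro emeasure_eq_AE) auto
      then show ?thesis using False A sm by simp
    qed
  qed
  then show False using nd by simp
qed

lemma pos_integral_sq:
  fixes \<mu> :: "real measure" and k :: real
  assumes prob: "prob_space \<mu>" and sm: "sets \<mu> = sets borel" and nd: "\<mu> \<noteq> return borel 0"
    and k: "k > 0"
  shows "(\<integral>\<^sup>+ x. ennreal (k * x\<^sup>2) \<partial>\<mu>) > 0"
proof -
  have "(\<lambda>x. ennreal (k * x\<^sup>2)) \<in> borel_measurable borel" by measurable
  then have m: "(\<lambda>x. ennreal (k * x\<^sup>2)) \<in> borel_measurable \<mu>"
    by (simp add: measurable_cong_sets[OF sm refl])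
  have "\<not> (AE x in \<mu>. ennreal (k * x\<^sup>2) = 0)"
  proof
    assume "AE x in \<mu>. ennreal (k * x\<^sup>2) = 0"
    then have "AE x in \<mu>. x = 0"
      by eventually_elim (use k in \<open>auto simp: ennreal_eq_0_iff mult_le_0_iff\<close>)
    then show False using not_ae_zero[OF prob sm nd] by simp
  qed
  then show ?thesis using nn_integral_0_iff_AE[OF m] by (simp add: zero_less_iff_neq_zero)
qed

lemma signs:
  fixes \<mu> :: "real measure"
  assumes prob: "prob_space \<mu>" and sm: "sets \<mu> = sets borel" and nd: "\<mu> \<noteq> return borel 0"
    and int: "integrable \<mu> (\<lambda>x. x)" and c: "(\<integral>x. x \<partial>\<mu>) = 0"
    and ae: "AE x in \<mu>. A \<le> x \<and> x \<le> B"
  shows "A < 0" "B > 0"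
proof -
  show "A < 0"
  proof (rule ccontr)
    assume "\<not> A < 0"
    then have "AE x in \<mu>. 0 \<le> x" using ae by (auto elim!: AE_mp)
    then have "AE x in \<mu>. x = 0" using integral_nonneg_eq_0_iff_AE[OF int] c by simp
    then show False using not_ae_zero[OF prob sm nd] by simp
  qed
  show "B > 0"
  proof (rule ccontr)
    assume "\<not> B > 0"
    then have "AE x in \<mu>. 0 \<le> - x" using ae by (auto elim!: AE_mp)
    moreover have "integrable \<mu> (\<lambda>x. - x)" using int by simp
    ultimately have "AE x in \<mu>. - x = 0" using integral_nonneg_eq_0_iff_AE[of \<mu> "\<lambda>x. - x"] c by simp
    then show False using not_ae_zero[OF prob sm nd] by simp
  qed
qed



lemma G_lower:
  fixes c a y :: real
  assumes c: "c \<ge> 0"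
    and ae: "AE x in \<mu>. \<forall>z. min y (y + a*x) \<le> z \<longrightarrow> z \<le> max y (y + a*x) \<longrightarrow> ennreal c \<le> inv_eta2 \<eta> z"
  shows "(\<integral>\<^sup>+ x. ennreal (c * (a*x)\<^sup>2 / 4) \<partial>\<mu>) \<le> Gfun \<eta> \<mu> y a"
  unfolding Gfun_def
  using ae by (intro nn_integral_mono_AE) (auto elim!: AE_mp intro!: q_lower[OF c])

lemma left_side:
  fixes \<mu> :: "real measure" and \<alpha> \<beta> :: real
  assumes eta_zero: "\<And>x. x \<notin> {l<..<r} \<Longrightarrow> \<eta> x = 0" and lr: "l < r"
    and prob: "prob_space \<mu>" and sm: "sets \<mu> = sets borel" and nd: "\<mu> \<noteq> return borel 0"
    and A: "Inf (msupp \<mu>) = \<alpha>" and B: "Sup (msupp \<mu>) = \<beta>" and an: "\<alpha> < 0" and bp: "\<beta> > 0"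
    and ae: "AE x in \<mu>. \<alpha> \<le> x \<and> x \<le> \<beta>"
    and H: "Limsup (at_right l) (\<lambda>x. ereal (\<bar>\<eta> x\<bar> / (x - l))) < \<infinity>"
  shows "Liminf (at_right l) (\<lambda>y. Gfun \<eta> \<mu> y (abar l r \<mu> y)) > 0"
proof -
  obtain n :: nat where "Limsup (at_right l) (\<lambda>x. ereal (\<bar>\<eta> x\<bar> / (x - l))) < ereal (real n)"
    using H less_PInf_Ex_of_nat by auto
  then have "eventually (\<lambda>x. ereal (\<bar>\<eta> x\<bar> / (x - l)) < ereal (real n)) (at_right l)"
    by (rule Limsup_lessD)
  then obtain b where b: "b > l" "\<And>z. l < z \<Longrightarrow> z < b \<Longrightarrow> \<bar>\<eta> z\<bar> / (z - l) < real n"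
    unfolding eventually_at_right_field by auto
  define C where "C = max (real n) 1"
  have Cp: "C > 0" unfolding C_def by simp
  have Cb: "\<bar>\<eta> z\<bar> \<le> C * (z - l)" if "l < z" "z < b" for z
  proof -
    have "\<bar>\<eta> z\<bar> / (z - l) \<le> C" using b(2)[OF that] unfolding C_def by simp
    then show ?thesis using that by (simp add: divide_le_eq mult.commute)
  qed
  define K where "K = 1 + \<beta> / (- \<alpha>)"
  have Kp: "K > 0" unfolding K_def using an bp by (simp add: divide_pos_pos add_pos_pos)
  define P where "P = (\<integral>\<^sup>+ x. ennreal (1 / (2 * C\<^sup>2 * K\<^sup>2 * \<alpha>\<^sup>2) * x\<^sup>2) \<partial>\<mu>)"
  have Pp: "P > 0" unfolding P_def using Cp Kp an
    by (intro pos_integral_sq[OF prob sm nd]) simp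
  define e where "e = min ((b - l) / K) ((- \<alpha>) * (r - l) / (\<beta> - \<alpha>))"
  have "(- \<alpha>) * (r - l) / (\<beta> - \<alpha>) > 0" using an bp lr by (intro divide_pos_pos mult_pos_pos) auto
  then have ep: "e > 0" unfolding e_def using b Kp by (simp add: divide_pos_pos)
  have ev: "eventually (\<lambda>y. P \<le> Gfun \<eta> \<mu> y (abar l r \<mu> y)) (at_right l)"
    unfolding eventually_at_right_field
  proof (intro exI[of _ "l + e"] conjI allI impI)
    show "l + e > l" using ep by simp
    fix y assume y: "l < y" "y < l + e"
    define d where "d = y - l"
    have dp: "d > 0" using y d_def by simp
    have "d < (b - l) / K" using y unfolding e_def d_def by simp
    then have d1: "K * d < b - l" using Kp by (simp add: less_divide_eq mult.commute)
    have "d < (- \<alpha>) * (r - l) / (\<beta> - \<alpha>)" using y unfolding e_def d_def by simp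
    then have "d * (\<beta> - \<alpha>) < (- \<alpha>) * (r - l) / (\<beta> - \<alpha>) * (\<beta> - \<alpha>)" using an bp
      by (intro mult_strict_right_mono) auto
    then have d2: "d * (\<beta> - \<alpha>) < (- \<alpha>) * (r - l)" using an bp by simp
    define a where "a = d / (- \<alpha>)"
    have ab: "abar l r \<mu> y = a"
    proof -
      have "(l - y) / \<alpha> = a" unfolding a_def d_def using an by (simp add: field_simps)
      moreover have "a \<le> (r - y) / \<beta>"
      proof -
        have "d * \<beta> \<le> (r - y) * (- \<alpha>)" using d2 unfolding d_def by (simp add: algebra_simps)
        then have "d * \<beta> / ((- \<alpha>) * \<beta>) \<le> (r - y) * (- \<alpha>) / ((- \<alpha>) * \<beta>)"
          using an bp mult_neg_pos[of \<alpha> \<beta>] by (intro divide_right_mono) auto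
        then show ?thesis unfolding a_def using an bp by simp
      qed
      ultimately show ?thesis unfolding abar_def A B by simp
    qed
    have ap: "a > 0" unfolding a_def using dp an by (simp add: divide_pos_neg)
    define c where "c = 2 / (C * K * d)\<^sup>2"
    have "AE x in \<mu>. \<forall>z. min y (y + a*x) \<le> z \<longrightarrow> z \<le> max y (y + a*x) \<longrightarrow> ennreal c \<le> inv_eta2 \<eta> z"
      using ae
    proof (rule AE_mp, intro AE_I2 impI allI)
      fix x z assume x: "\<alpha> \<le> x \<and> x \<le> \<beta>" and z1: "min y (y + a*x) \<le> z" and z2: "z \<le> max y (y + a*x)"
      have h1: "a * \<alpha> \<le> a * x" "a * x \<le> a * \<beta>" using x ap by (auto intro: mult_left_mono)
      have h2: "a * \<alpha> = - d" unfolding a_def using an by simp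
      have h3: "a * \<beta> = K * d - d" unfolding a_def K_def using an by (simp add: field_simps)
      have h4: "a * \<beta> \<ge> 0" using ap bp by simp
      have "y + a * \<alpha> \<le> min y (y + a * x)" using h1 h2 dp by simp
      then have "y + a * \<alpha> \<le> z" using z1 by linarith
      then have zl: "l \<le> z" using h2 unfolding d_def by linarith
      have "max y (y + a * x) \<le> y + a * \<beta>" using h1 h4 by simp
      then have "z \<le> y + a * \<beta>" using z2 by linarith
      then have zu: "z \<le> l + K * d" using h3 unfolding d_def by linarith
      have "\<eta> z = 0 \<or> \<bar>\<eta> z\<bar> \<le> C * K * d"
      proof (cases "z = l")
        case True then show ?thesis using eta_zero by auto
      next
        case False
        then have "l < z" "z < b" using zl zu d1 by auto
        then have "\<bar>\<eta> z\<bar> \<le> C * (z - l)" by (rule Cb)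
        also have "\<dots> \<le> C * (K * d)" using zu Cp by (intro mult_left_mono) auto
        finally show ?thesis by (simp add: mult.assoc)
      qed
      then show "ennreal c \<le> inv_eta2 \<eta> z" unfolding c_def
        by (intro inv_eta2_lower) (use Cp Kp dp in auto)
    qed
    then have "(\<integral>\<^sup>+ x. ennreal (c * (a*x)\<^sup>2 / 4) \<partial>\<mu>) \<le> Gfun \<eta> \<mu> y a"
      by (intro G_lower) (simp add: c_def)
    moreover have "\<And>x. c * (a*x)\<^sup>2 / 4 = 1 / (2 * C\<^sup>2 * K\<^sup>2 * \<alpha>\<^sup>2) * x\<^sup>2"
      unfolding c_def a_def using Cp Kp dp an by (simp add: field_simps power2_eq_square)
    ultimately show "P \<le> Gfun \<eta> \<mu> y (abar l r \<mu> y)" unfolding P_def ab by simp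
  qed
  have "P \<le> Liminf (at_right l) (\<lambda>y. Gfun \<eta> \<mu> y (abar l r \<mu> y))"
    by (rule Liminf_bounded[OF ev])
  then show ?thesis using Pp by (rule order.strict_trans2[rotated])
qed



lemma right_side:
  fixes \<mu> :: "real measure" and \<alpha> \<beta> :: real
  assumes eta_zero: "\<And>x. x \<notin> {l<..<r} \<Longrightarrow> \<eta> x = 0" and lr: "l < r"
    and prob: "prob_space \<mu>" and sm: "sets \<mu> = sets borel" and nd: "\<mu> \<noteq> return borel 0"
    and A: "Inf (msupp \<mu>) = \<alpha>" and B: "Sup (msupp \<mu>) = \<beta>" and an: "\<alpha> < 0" and bp: "\<beta> > 0"
    and ae: "AE x in \<mu>. \<alpha> \<le> x \<and> x \<le> \<beta>"
    and H: "Limsup (at_left r) (\<lambda>x. ereal (\<bar>\<eta> x\<bar> / (r - x))) < \<infinity>"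
  shows "Liminf (at_left r) (\<lambda>y. Gfun \<eta> \<mu> y (abar l r \<mu> y)) > 0"
proof -
  obtain n :: nat where "Limsup (at_left r) (\<lambda>x. ereal (\<bar>\<eta> x\<bar> / (r - x))) < ereal (real n)"
    using H less_PInf_Ex_of_nat by auto
  then have "eventually (\<lambda>x. ereal (\<bar>\<eta> x\<bar> / (r - x)) < ereal (real n)) (at_left r)"
    by (rule Limsup_lessD)
  then obtain b where b: "b < r" "\<And>z. b < z \<Longrightarrow> z < r \<Longrightarrow> \<bar>\<eta> z\<bar> / (r - z) < real n"
    unfolding eventually_at_left_field by auto
  define C where "C = max (real n) 1"
  have Cp: "C > 0" unfolding C_def by simp
  have Cb: "\<bar>\<eta> z\<bar> \<le> C * (r - z)" if "b < z" "z < r" for z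
  proof -
    have "\<bar>\<eta> z\<bar> / (r - z) \<le> C" using b(2)[OF that] unfolding C_def by simp
    then show ?thesis using that by (simp add: divide_le_eq mult.commute)
  qed
  define K where "K = 1 + (- \<alpha>) / \<beta>"
  have Kp: "K > 0" unfolding K_def using an bp by (simp add: divide_pos_pos add_pos_pos)
  define P where "P = (\<integral>\<^sup>+ x. ennreal (1 / (2 * C\<^sup>2 * K\<^sup>2 * \<beta>\<^sup>2) * x\<^sup>2) \<partial>\<mu>)"
  have Pp: "P > 0" unfolding P_def using Cp Kp bp
    by (intro pos_integral_sq[OF prob sm nd]) simp
  define e where "e = min ((r - b) / K) (\<beta> * (r - l) / (\<beta> - \<alpha>))"
  have "\<beta> * (r - l) / (\<beta> - \<alpha>) > 0" using an bp lr by (intro divide_pos_pos mult_pos_pos) auto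
  then have ep: "e > 0" unfolding e_def using b Kp by (simp add: divide_pos_pos)
  have ev: "eventually (\<lambda>y. P \<le> Gfun \<eta> \<mu> y (abar l r \<mu> y)) (at_left r)"
    unfolding eventually_at_left_field
  proof (intro exI[of _ "r - e"] conjI allI impI)
    show "r - e < r" using ep by simp
    fix y assume y: "r - e < y" "y < r"
    define d where "d = r - y"
    have dp: "d > 0" using y d_def by simp
    have "d < (r - b) / K" using y unfolding e_def d_def by simp
    then have d1: "K * d < r - b" using Kp by (simp add: less_divide_eq mult.commute)
    have "d < \<beta> * (r - l) / (\<beta> - \<alpha>)" using y unfolding e_def d_def by simp
    then have "d * (\<beta> - \<alpha>) < \<beta> * (r - l) / (\<beta> - \<alpha>) * (\<beta> - \<alpha>)" using an bp
      by (intro mult_strict_right_mono) auto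
    then have d2: "d * (\<beta> - \<alpha>) < \<beta> * (r - l)" using an bp by simp
    define a where "a = d / \<beta>"
    have ab: "abar l r \<mu> y = a"
    proof -
      have "(r - y) / \<beta> = a" unfolding a_def d_def by simp
      moreover have "a \<le> (l - y) / \<alpha>"
      proof -
        have "d * (- \<alpha>) \<le> (y - l) * \<beta>" using d2 unfolding d_def by (simp add: algebra_simps)
        then have "d * (- \<alpha>) / (\<beta> * (- \<alpha>)) \<le> (y - l) * \<beta> / (\<beta> * (- \<alpha>))"
          using an bp mult_pos_neg[of \<beta> \<alpha>] by (intro divide_right_mono) auto
        then have "a \<le> (y - l) / (- \<alpha>)" unfolding a_def using an bp by simp
        moreover have "(y - l) / (- \<alpha>) = (l - y) / \<alpha>"
          using an by (simp add: field_simps)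
        ultimately show ?thesis by simp
      qed
      ultimately show ?thesis unfolding abar_def A B by simp
    qed
    have ap: "a > 0" unfolding a_def using dp bp by simp
    define c where "c = 2 / (C * K * d)\<^sup>2"
    have "AE x in \<mu>. \<forall>z. min y (y + a*x) \<le> z \<longrightarrow> z \<le> max y (y + a*x) \<longrightarrow> ennreal c \<le> inv_eta2 \<eta> z"
      using ae
    proof (rule AE_mp, intro AE_I2 impI allI)
      fix x z assume x: "\<alpha> \<le> x \<and> x \<le> \<beta>" and z1: "min y (y + a*x) \<le> z" and z2: "z \<le> max y (y + a*x)"
      have h1: "a * \<alpha> \<le> a * x" "a * x \<le> a * \<beta>" using x ap by (auto intro: mult_left_mono)
      have h2: "a * \<beta> = d" unfolding a_def using bp by simp
      have h3: "a * \<alpha> = d - K * d" unfolding a_def K_def using bp by (simp add: field_simps)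
      have h4: "a * \<alpha> \<le> 0" using ap an by (intro mult_nonneg_nonpos) auto
      have "y + a * \<alpha> \<le> min y (y + a * x)" using h1 h4 by simp
      then have "y + a * \<alpha> \<le> z" using z1 by linarith
      then have zl: "r - K * d \<le> z" using h3 unfolding d_def by linarith
      have "max y (y + a * x) \<le> y + a * \<beta>" using h1 h2 dp by simp
      then have "z \<le> y + a * \<beta>" using z2 by linarith
      then have zu: "z \<le> r" using h2 unfolding d_def by linarith
      have "\<eta> z = 0 \<or> \<bar>\<eta> z\<bar> \<le> C * K * d"
      proof (cases "z = r")
        case True then show ?thesis using eta_zero by auto
      next
        case False
        then have "b < z" "z < r" using zl zu d1 by auto
        then have "\<bar>\<eta> z\<bar> \<le> C * (r - z)" by (rule Cb)
        also have "\<dots> \<le> C * (K * d)" using zl Cp by (intro mult_left_mono) auto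
        finally show ?thesis by (simp add: mult.assoc)
      qed
      then show "ennreal c \<le> inv_eta2 \<eta> z" unfolding c_def
        by (intro inv_eta2_lower) (use Cp Kp dp in auto)
    qed
    then have "(\<integral>\<^sup>+ x. ennreal (c * (a*x)\<^sup>2 / 4) \<partial>\<mu>) \<le> Gfun \<eta> \<mu> y a"
      by (intro G_lower) (simp add: c_def)
    moreover have "\<And>x. c * (a*x)\<^sup>2 / 4 = 1 / (2 * C\<^sup>2 * K\<^sup>2 * \<beta>\<^sup>2) * x\<^sup>2"
      unfolding c_def a_def using Cp Kp dp bp by (simp add: field_simps power2_eq_square)
    ultimately show "P \<le> Gfun \<eta> \<mu> y (abar l r \<mu> y)" unfolding P_def ab by simp
  qed
  have "P \<le> Liminf (at_left r) (\<lambda>y. Gfun \<eta> \<mu> y (abar l r \<mu> y))"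
    by (rule Liminf_bounded[OF ev])
  then show ?thesis using Pp by (rule order.strict_trans2[rotated])
qed


theorem mainTheorem11:
  fixes l r m :: real and \<eta> :: "real \<Rightarrow> real" and \<mu> :: "real measure"
  assumes lr: "l < r"
    and eta_borel: "\<eta> \<in> borel_measurable borel"
    and eta_nz: "\<And>x. x \<in> {l<..<r} \<Longrightarrow> \<eta> x \<noteq> 0"
    and eta_zero: "\<And>x. x \<notin> {l<..<r} \<Longrightarrow> \<eta> x = 0"
    and loc_int: "\<And>a b. l < a \<Longrightarrow> b < r \<Longrightarrow> set_integrable lborel {a..b} (\<lambda>z. 1 / (\<eta> z)\<^sup>2)"
    and m_in: "m \<in> {l<..<r}"
    and prob: "prob_space \<mu>"
    and sets_mu: "sets \<mu> = sets borel"
    and mu_int: "integrable \<mu> (\<lambda>x. x)"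
    and centered: "(\<integral>x. x \<partial>\<mu>) = 0"
    and not_dirac: "\<mu> \<noteq> return borel 0"
    and supp_below: "bdd_below (msupp \<mu>)"
    and supp_above: "bdd_above (msupp \<mu>)"
  shows "(Limsup (at_right l) (\<lambda>x. ereal (\<bar>\<eta> x\<bar> / (x - l))) < \<infinity> \<longrightarrow>
            ((\<lambda>x. qfun \<eta> m x) \<longlongrightarrow> \<infinity>) (at_right l) \<longrightarrow>
            Liminf (at_right l) (\<lambda>y. Gfun \<eta> \<mu> y (abar l r \<mu> y)) > 0)
       \<and> (Limsup (at_left r) (\<lambda>x. ereal (\<bar>\<eta> x\<bar> / (r - x))) < \<infinity> \<longrightarrow>
            ((\<lambda>x. qfun \<eta> m x) \<longlongrightarrow> \<infinity>) (at_left r) \<longrightarrow>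
            Liminf (at_left r) (\<lambda>y. Gfun \<eta> \<mu> y (abar l r \<mu> y)) > 0)"
  proof -
  have ae: "AE x in \<mu>. Inf (msupp \<mu>) \<le> x \<and> x \<le> Sup (msupp \<mu>)"
    by (rule supp_facts(2)[OF prob sets_mu supp_below supp_above])
  note sg = signs[OF prob sets_mu not_dirac mu_int centered ae]
  show ?thesis
    using left_side[of l r \<eta>, OF eta_zero lr prob sets_mu not_dirac refl refl sg ae]
      right_side[of l r \<eta>, OF eta_zero lr prob sets_mu not_dirac refl refl sg ae] by blast
qed

end
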